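(* Let $\epsilon>0$ be the parameter of instance $\mathcal P$ and let $\hat\epsilon\in[0,\epsilon]$. If $(x^*,y^* )$ is an $\hat\epsilon$-stationary point of the splitting reformulation (SP) of instance $\mathcal P$, then $x^*$ is a $2\hat\epsilon$-stationary point of the auxiliary problem (AP): $\min_xf_0(x)$ s.t. $Hx=0$.
   Context: (SP) of instance $\mathcal P$: $\min_{x,y}f_0(x)+\bar g(y)$ s.t. $Ax+b=0$, $y=\bar Ax+\bar b$. $(x^*,y^* )$ is an $\hat\epsilon$-stationary point of (SP) if there exist $z_1\in\mathbb R^{\bar n}$, $z_2\in\mathbb R^n$ with $\max\{\mathrm{dist}(0,\partial\bar g(y^* )-z_1),\|\nabla f_0(x^* )+\bar A^\top z_1+A^\top z_2\|,\|y^*-\bar Ax^*-\bar b\|,\|Ax^*+b\|\}\le\hat\epsilon$. $x^*$ is a $\delta$-stationary point of (AP) if $\max\{\|Hx^*\|,\min_{\gamma'}\|\nabla f_0(x^* )+H^\top\gamma'\|\}\le\delta$. Instance $\mathcal P$: fix $\epsilon\in(0,1)$, $L_f>0$, integers $m_1\ge2$, $m_2\ge1$ with $m_1m_2$ even, $m=3m_1m_2$, an odd integer $\bar d\ge5$, $d=m\bar d$. Write $x=(x_1^\top,\dots,x_m^\top)^\top$, $x_i\in\mathbb R^{\bar d}$; $[z]_j$ is the $j$-th coordinate. $J_p\in\mathbb R^{(p-1)\times p}$ has $-1$ at $(k,k)$, $1$ at $(k,k+1)$, zero elsewhere. $H=mL_f(J_m\otimes I_{\bar d})$. $\mathcal M=\{im_1:i=1,\dots,3m_2-1\}$,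 $\mathcal M^C=\{1,\dots,m-1\}\setminus\mathcal M$, $n=(m-3m_2)\bar d$, $\bar n=(3m_2-1)\bar d$, $\bar A=mL_f(J_{\mathcal M}\otimes I_{\bar d})$, $A=mL_f(J_{\mathcal M^C}\otimes I_{\bar d})$ with $J_{\mathcal M},J_{\mathcal M^C}$ the rows of $J_m$ indexed by $\mathcal M,\mathcal M^C$; $b=0$, $\bar b=0$. Choose $\beta>(50\pi+1+\|A\|)\sqrt m\,\epsilon$; $\bar g(y)=\frac{\beta}{mL_f}\|y\|_1$. $\Psi(u)=0$ ($u\le0$), $1-e^{-u^2}$ ($u>0$); $\Phi(v)=4\arctan v+2\pi$. For $z\in\mathbb R^{\bar d}$: $\varphi(z,1)=-\Psi(1)\Phi([z]_1)$, $\varphi(z,j)=\Psi(-[z]_{j-1})\Phi(-[z]_j)-\Psi([z]_{j-1})\Phi([z]_j)$ ($2\le j\le\bar d$); $h_i(z)=\varphi(z,1)+3\sum_{j=1}^{\lfloor\bar d/2\rfloor}\varphi(z,2j)$ for $1\le i\le m/3$, $h_i(z)=\varphi(z,1)$ for $m/3+1\le i\le 2m/3$, $h_i(z)=\varphi(z,1)+3\sum_{j=1}^{\lfloor\bar d/2\rfloor}\varphi(z,2j+1)$ for $2m/3+1\le i\le m$. $f_i(z)=\frac{300\pi\epsilon^2}{mL_f}h_i(\frac{\sqrt mL_fz}{150\pi\epsilon})$, $f_0(x)=\sum_{i=1}^mf_i(x_i)$. Instance $\mathcal P$ is $\min_xf_0(x)+\bar g(\bar Ax)$ s.t. $Ax+b=0$.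 *)

theory Defs
  imports "HOL-Analysis.Analysis"
begin

text \<open>A vector of R^I (I a finite index set) is a function on the index type,
  required to vanish outside I. Blocks of x in R^(m*dbar) are indexed by pairs
  (i,j) with 1 <= i <= m (block) and 1 <= j <= dbar (coordinate).\<close>

type_synonym vec = "nat \<times> nat \<Rightarrow> real"

definition vecs :: "(nat \<times> nat) set \<Rightarrow> vec set" where
  "vecs I = {v. \<forall>p. p \<notin> I \<longrightarrow> v p = 0}"

definition vinner :: "(nat \<times> nat) set \<Rightarrow> vec \<Rightarrow> vec \<Rightarrow> real" where
  "vinner I u v = (\<Sum>p\<in>I. u p * v p)"

definition vnorm :: "(nat \<times> nat) set \<Rightarrow> vec \<Rightarrow> real" where
  "vnorm I v = sqrt (\<Sum>p\<in>I. (v p)\<^sup>2)"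

definition l1norm :: "(nat \<times> nat) set \<Rightarrow> vec \<Rightarrow> real" where
  "l1norm I v = (\<Sum>p\<in>I. \<bar>v p\<bar>)"

definition matvec :: "(nat \<times> nat) set \<Rightarrow> (nat \<times> nat) set \<Rightarrow> (nat \<times> nat \<Rightarrow> nat \<times> nat \<Rightarrow> real) \<Rightarrow> vec \<Rightarrow> vec" where
  "matvec R C M x = (\<lambda>r. if r \<in> R then (\<Sum>c\<in>C. M r c * x c) else 0)"

definition tmatvec :: "(nat \<times> nat) set \<Rightarrow> (nat \<times> nat) set \<Rightarrow> (nat \<times> nat \<Rightarrow> nat \<times> nat \<Rightarrow> real) \<Rightarrow> vec \<Rightarrow> vec" where
  "tmatvec R C M z = (\<lambda>c. if c \<in> C then (\<Sum>r\<in>R. M r c * z r) else 0)"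

definition opnorm :: "(nat \<times> nat) set \<Rightarrow> (nat \<times> nat) set \<Rightarrow> (nat \<times> nat \<Rightarrow> nat \<times> nat \<Rightarrow> real) \<Rightarrow> real" where
  "opnorm R C M = Sup {vnorm R (matvec R C M x) | x. x \<in> vecs C \<and> vnorm C x \<le> 1}"

definition grad :: "(nat \<times> nat) set \<Rightarrow> (vec \<Rightarrow> real) \<Rightarrow> vec \<Rightarrow> vec" where
  "grad I f x = (\<lambda>p. if p \<in> I then deriv (\<lambda>t. f (x(p := t))) (x p) else 0)"

definition subdiff :: "(nat \<times> nat) set \<Rightarrow> (vec \<Rightarrow> real) \<Rightarrow> vec \<Rightarrow> vec set" where
  "subdiff I g y = {s \<in> vecs I. \<forall>w \<in> vecs I. g w \<ge> g y + vinner I s (\<lambda>p. w p - y p)}"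

definition dist0_shift :: "(nat \<times> nat) set \<Rightarrow> vec set \<Rightarrow> vec \<Rightarrow> real" where
  "dist0_shift I S z = Inf {vnorm I (\<lambda>p. s p - z p) | s. s \<in> S}"

definition Psi :: "real \<Rightarrow> real" where
  "Psi u = (if u \<le> 0 then 0 else 1 - exp (- (u\<^sup>2)))"

definition Phi :: "real \<Rightarrow> real" where
  "Phi v = 4 * arctan v + 2 * pi"

text \<open>z in R^dbar is a function nat => real with coordinates [z]_j = z j, 1 <= j <= dbar.\<close>
definition varphi :: "(nat \<Rightarrow> real) \<Rightarrow> nat \<Rightarrow> real" where
  "varphi z j = (if j = 1 then - Psi 1 * Phi (z 1)
                 else Psi (- z (j - 1)) * Phi (- z j) - Psi (z (j - 1)) * Phi (z j))"

definition hfun :: "nat \<Rightarrow> nat \<Rightarrow> nat \<Rightarrow> (nat \<Rightarrow> real) \<Rightarrow> real" where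
  "hfun m dbar i z =
     (if 1 \<le> i \<and> i \<le> m div 3 then varphi z 1 + 3 * (\<Sum>j=1..dbar div 2. varphi z (2 * j))
      else if m div 3 + 1 \<le> i \<and> i \<le> 2 * m div 3 then varphi z 1
      else varphi z 1 + 3 * (\<Sum>j=1..dbar div 2. varphi z (2 * j + 1)))"

definition ffun :: "real \<Rightarrow> real \<Rightarrow> nat \<Rightarrow> nat \<Rightarrow> nat \<Rightarrow> (nat \<Rightarrow> real) \<Rightarrow> real" where
  "ffun \<epsilon> Lf m dbar i z =
     300 * pi * \<epsilon>\<^sup>2 / (real m * Lf) *
       hfun m dbar i (\<lambda>j. sqrt (real m) * Lf * z j / (150 * pi * \<epsilon>))"

definition f0 :: "real \<Rightarrow> real \<Rightarrow> nat \<Rightarrow> nat \<Rightarrow> vec \<Rightarrow> real" where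
  "f0 \<epsilon> Lf m dbar x = (\<Sum>i=1..m. ffun \<epsilon> Lf m dbar i (\<lambda>j. x (i, j)))"

definition Xidx :: "nat \<Rightarrow> nat \<Rightarrow> (nat \<times> nat) set" where
  "Xidx m dbar = {1..m} \<times> {1..dbar}"

definition Hrows :: "nat \<Rightarrow> nat \<Rightarrow> (nat \<times> nat) set" where
  "Hrows m dbar = {1..m - 1} \<times> {1..dbar}"

definition Mset :: "nat \<Rightarrow> nat \<Rightarrow> nat set" where
  "Mset m1 m2 = {i * m1 | i. 1 \<le> i \<and> i \<le> 3 * m2 - 1}"

definition MCset :: "nat \<Rightarrow> nat \<Rightarrow> nat set" where
  "MCset m1 m2 = {1..3 * m1 * m2 - 1} - Mset m1 m2"

text \<open>Entries of J_m (row k in 1..m-1, column i in 1..m).\<close>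
definition Jent :: "nat \<Rightarrow> nat \<Rightarrow> real" where
  "Jent k i = (if i = k then -1 else if i = k + 1 then 1 else 0)"

text \<open>Entries of m L_f (J \<otimes> I_dbar); H, Abar, A are its restrictions to the row
  index sets Hrows, Mset x {1..dbar}, MCset x {1..dbar} respectively.\<close>
definition Kmat :: "nat \<Rightarrow> real \<Rightarrow> nat \<times> nat \<Rightarrow> nat \<times> nat \<Rightarrow> real" where
  "Kmat m Lf r c = real m * Lf * Jent (fst r) (fst c) * (if snd r = snd c then 1 else 0)"

definition gbar :: "real \<Rightarrow> nat \<Rightarrow> real \<Rightarrow> (nat \<times> nat) set \<Rightarrow> vec \<Rightarrow> real" where
  "gbar \<beta> m Lf R y = \<beta> / (real m * Lf) * l1norm R y"

text \<open>Hat-epsilon-stationarity for (SP) of instance P (b = 0, bbar = 0).\<close>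
definition SP_stationary ::
  "real \<Rightarrow> real \<Rightarrow> nat \<Rightarrow> nat \<Rightarrow> nat \<Rightarrow> real \<Rightarrow> real \<Rightarrow> vec \<Rightarrow> vec \<Rightarrow> bool" where
  "SP_stationary \<epsilon> Lf m1 m2 dbar \<beta> eh xs ys \<longleftrightarrow>
     (let m = 3 * m1 * m2; X = Xidx m dbar;
          Rb = Mset m1 m2 \<times> {1..dbar}; Ra = MCset m1 m2 \<times> {1..dbar} in
      \<exists>z1 \<in> vecs Rb. \<exists>z2 \<in> vecs Ra.
        max (max (dist0_shift Rb (subdiff Rb (gbar \<beta> m Lf Rb) ys) z1)
                 (vnorm X (\<lambda>p. grad X (f0 \<epsilon> Lf m dbar) xs p
                              + tmatvec Rb X (Kmat m Lf) z1 p
                              + tmatvec Ra X (Kmat m Lf) z2 p)))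
            (max (vnorm Rb (\<lambda>p. ys p - matvec Rb X (Kmat m Lf) xs p))
                 (vnorm Ra (matvec Ra X (Kmat m Lf) xs)))
        \<le> eh)"

definition AP_stationary :: "real \<Rightarrow> real \<Rightarrow> nat \<Rightarrow> nat \<Rightarrow> real \<Rightarrow> vec \<Rightarrow> bool" where
  "AP_stationary \<epsilon> Lf m dbar \<delta> xs \<longleftrightarrow>
     (let X = Xidx m dbar; R = Hrows m dbar in
      max (vnorm R (matvec R X (Kmat m Lf) xs))
          (Inf {vnorm X (\<lambda>p. grad X (f0 \<epsilon> Lf m dbar) xs p + tmatvec R X (Kmat m Lf) \<gamma> p)
                | \<gamma>. \<gamma> \<in> vecs R})
        \<le> \<delta>)"

end

theory Submission
  imports Defs
begin

lemma maxsq_deriv: "((\<lambda>u::real. (max u 0)\<^sup>2) has_real_derivative 2 * max u 0) (at u)"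
proof (cases "u = 0")
  case True
  have "((\<lambda>y. ((max y 0)\<^sup>2 - (max 0 0)\<^sup>2) / (y - 0)) \<longlongrightarrow> 0) (at (0::real))"
  proof (rule Lim_null_comparison[where g="\<lambda>y. \<bar>y\<bar>"])
    show "\<forall>\<^sub>F x in at 0. norm (((max x 0)\<^sup>2 - (max 0 0)\<^sup>2) / (x - 0)) \<le> \<bar>x\<bar>"
    proof (rule always_eventually, rule allI)
      fix x :: real
      show "norm (((max x 0)\<^sup>2 - (max 0 0)\<^sup>2) / (x - 0)) \<le> \<bar>x\<bar>"
        by (cases "x \<le> 0") (simp_all add: max_def power2_eq_square)
    qed
    show "((\<lambda>y::real. \<bar>y\<bar>) \<longlongrightarrow> 0) (at 0)"
      by (intro tendsto_rabs_zero tendsto_ident_at)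
  qed
  then show ?thesis using True by (simp add: has_field_derivative_iff)
next
  case False
  show ?thesis
  proof (cases "u > 0")
    case True
    have "((\<lambda>u::real. u\<^sup>2) has_real_derivative 2 * max u 0) (at u)"
      using True by (auto intro!: derivative_eq_intros)
    then show ?thesis
      apply (rule has_field_derivative_transform_within_open[where S="{0<..}"])
      using True by auto
  next
    case F: False
    with False have "u < 0" by auto
    have "((\<lambda>u::real. 0) has_real_derivative 2 * max u 0) (at u)"
      using \<open>u<0\<close> by (auto intro!: derivative_eq_intros)
    then show ?thesis
      apply (rule has_field_derivative_transform_within_open[where S="{..<0}"])
      using \<open>u<0\<close> by auto
  qed
qed

definition dPsi :: "real \<Rightarrow> real" where
  "dPsi u = exp (- (max u 0)\<^sup>2) * (2 * max u 0)"

lemma Psi_alt: "Psi u = 1 - exp (- (max u 0)\<^sup>2)"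
  by (simp add: Psi_def max_def)

lemma Psi_deriv: "(Psi has_real_derivative dPsi u) (at u)"
proof -
  have "((\<lambda>u. - (max u 0)\<^sup>2) has_real_derivative - (2 * max u 0)) (at u)"
    using maxsq_deriv by (rule DERIV_minus)
  then have "((\<lambda>u. exp (- (max u 0)\<^sup>2)) has_real_derivative exp (- (max u 0)\<^sup>2) * - (2 * max u 0)) (at u)"
    by (rule DERIV_fun_exp)
  then have "((\<lambda>u. 1 - exp (- (max u 0)\<^sup>2)) has_real_derivative 0 - exp (- (max u 0)\<^sup>2) * - (2 * max u 0)) (at u)"
    by (intro DERIV_diff) auto
  then have "((\<lambda>u. 1 - exp (- (max u 0)\<^sup>2)) has_real_derivative dPsi u) (at u)"
    unfolding dPsi_def by simp
  then show ?thesis by (simp add: Psi_alt[abs_def])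
qed

lemma dPsi_nonneg: "0 \<le> dPsi u" by (simp add: dPsi_def)

lemma dPsi_le1: "dPsi u \<le> 1"
proof -
  let ?v = "max u 0"
  have "1 + ?v\<^sup>2 \<le> exp (?v\<^sup>2)" by (rule exp_ge_add_one_self)
  moreover have "2 * ?v \<le> 1 + ?v\<^sup>2" using sum_squares_bound[of ?v 1] by (simp add: power2_eq_square)
  ultimately have "2 * ?v \<le> exp (?v\<^sup>2)" by linarith
  then show ?thesis unfolding dPsi_def
    by (simp add: exp_minus field_simps)
qed

lemma dPsi_sum: "dPsi u + dPsi (-u) \<le> 1"
  using dPsi_le1[of u] dPsi_le1[of "-u"] by (cases "u \<le> 0") (auto simp: dPsi_def max_def)

lemma Psi_nonneg: "0 \<le> Psi u" by (simp add: Psi_def)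
lemma Psi_le1: "Psi u \<le> 1" by (simp add: Psi_def)
lemma Psi_sum: "Psi u + Psi (-u) \<le> 1"
  using Psi_le1[of u] Psi_le1[of "-u"] by (cases "u \<le> 0") (auto simp: Psi_def)

definition dPhi :: "real \<Rightarrow> real" where "dPhi v = 4 / (1 + v\<^sup>2)"

lemma Phi_deriv: "(Phi has_real_derivative dPhi v) (at v)"
  unfolding Phi_def[abs_def] dPhi_def
  by (auto intro!: derivative_eq_intros simp: power2_eq_square field_simps)

lemma dPhi_bounds: "0 \<le> dPhi v" "dPhi v \<le> 4"
  unfolding dPhi_def by (auto simp: divide_le_eq add_nonneg_nonneg add_pos_nonneg)

lemma Phi_bounds: "0 \<le> Phi v" "Phi v \<le> 4 * pi"
  unfolding Phi_def using arctan_bounded[of v] by auto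


lemma Phi_deriv_neg: "((\<lambda>t. Phi (- t)) has_real_derivative dPhi (- s) * -1) (at s)"
  by (rule DERIV_chain'[where g=Phi]) (auto intro!: derivative_eq_intros Phi_deriv)

lemma Psi_deriv_neg: "((\<lambda>t. Psi (- t)) has_real_derivative dPsi (- s) * -1) (at s)"
  by (rule DERIV_chain'[where g=Psi]) (auto intro!: derivative_eq_intros Psi_deriv)

lemma bound1:
  fixes p q a b :: real
  assumes "0 \<le> p" "0 \<le> q" "p + q \<le> 1" "0 \<le> a" "a \<le> c" "0 \<le> b" "b \<le> c"
  shows "\<bar>p * (a * -1) - q * b\<bar> \<le> c" "\<bar>p * -1 * a - q * b\<bar> \<le> c"
proof -
  have "p * a \<le> p * c" "q * b \<le> q * c" using assms by (auto intro: mult_left_mono)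
  moreover have "p * c + q * c \<le> c"
  proof -
    have "0 \<le> c" using assms by linarith
    then have "(p + q) * c \<le> c" using assms by (intro mult_left_le_one_le) auto
    then show ?thesis by (simp add: distrib_right)
  qed
  moreover have "0 \<le> p * a" "0 \<le> q * b" using assms by auto
  ultimately show "\<bar>p * (a * -1) - q * b\<bar> \<le> c" "\<bar>p * -1 * a - q * b\<bar> \<le> c"
    by (auto simp: algebra_simps)
qed

lemma varphi_deriv:
  assumes "1 \<le> j0"
  shows "\<exists>D. ((\<lambda>t. varphi (z(j0:=t)) j) has_real_derivative D) (at s) \<and>
             \<bar>D\<bar> \<le> (if j = j0 then 4 else 0) + (if j = j0 + 1 then 4 * pi else 0)"
proof (cases "j = 1")
  case True
  show ?thesis
  proof (cases "j0 = 1")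
    case True
    have "((\<lambda>t. - Psi 1 * Phi t) has_real_derivative - Psi 1 * dPhi s) (at s)"
      by (intro DERIV_cmult Phi_deriv)
    moreover have "\<bar>- Psi 1 * dPhi s\<bar> \<le> 4"
      using Psi_nonneg[of 1] Psi_le1[of 1] dPhi_bounds[of s]
      by (simp add: abs_mult) (metis mult_left_le_one_le order_trans)
    ultimately show ?thesis using True \<open>j = 1\<close>
      by (intro exI[of _ "- Psi 1 * dPhi s"]) (simp add: varphi_def)
  next
    case False
    then show ?thesis using \<open>j = 1\<close>
      by (intro exI[of _ 0]) (simp add: varphi_def)
  qed
next
  case j1: False
  have eq: "\<And>w. varphi w j = Psi (- w (j - 1)) * Phi (- w j) - Psi (w (j - 1)) * Phi (w j)"
    using j1 by (simp add: varphi_def)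
  show ?thesis
  proof (cases "j = j0")
    case True
    with assms have ne: "j - 1 \<noteq> j0" by auto
    let ?a = "z (j - 1)"
    have f: "(\<lambda>t. varphi (z(j0:=t)) j) = (\<lambda>t. Psi (- ?a) * Phi (- t) - Psi ?a * Phi t)"
      unfolding eq using ne True by simp
    have "((\<lambda>t. Psi (- ?a) * Phi (- t) - Psi ?a * Phi t) has_real_derivative
           Psi (- ?a) * (dPhi (- s) * -1) - Psi ?a * dPhi s) (at s)"
      by (intro DERIV_diff DERIV_cmult Phi_deriv Phi_deriv_neg)
    moreover have "\<bar>Psi (- ?a) * (dPhi (- s) * -1) - Psi ?a * dPhi s\<bar> \<le> 4"
      apply (rule bound1)
      using Psi_nonneg Psi_sum[of ?a] dPhi_bounds by (auto simp: add.commute)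
    ultimately show ?thesis using True f by (intro exI[of _ "Psi (- ?a) * (dPhi (- s) * -1) - Psi ?a * dPhi s"]) simp
  next
    case nj: False
    show ?thesis
    proof (cases "j = j0 + 1")
      case True
      let ?b = "z j"
      have f: "(\<lambda>t. varphi (z(j0:=t)) j) = (\<lambda>t. Psi (- t) * Phi (- ?b) - Psi t * Phi ?b)"
        unfolding eq using nj True by simp
      have "((\<lambda>t. Psi (- t) * Phi (- ?b) - Psi t * Phi ?b) has_real_derivative
           dPsi (- s) * -1 * Phi (- ?b) - dPsi s * Phi ?b) (at s)"
        using DERIV_diff[OF DERIV_cmult_right[OF Psi_deriv_neg, of "Phi (- ?b)"]
                            DERIV_cmult_right[OF Psi_deriv, of "Phi ?b"]]
        by simp
      moreover have "\<bar>dPsi (- s) * -1 * Phi (- ?b) - dPsi s * Phi ?b\<bar> \<le> 4 * pi"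
        apply (rule bound1)
        using dPsi_nonneg dPsi_sum[of s] Phi_bounds by (auto simp: add.commute)
      ultimately show ?thesis using True nj f
        by (intro exI[of _ "dPsi (- s) * -1 * Phi (- ?b) - dPsi s * Phi ?b"]) simp
    next
      case False
      then have "(\<lambda>t. varphi (z(j0:=t)) j) = (\<lambda>t. varphi z j)"
      proof -
        have "j - 1 \<noteq> j0" using False j1 assms by auto
        then show ?thesis unfolding eq using nj by auto
      qed
      then show ?thesis using nj False by (intro exI[of _ 0]) simp
    qed
  qed
qed


lemma sum_deriv:
  assumes "1 \<le> j0"
  shows "\<exists>D. ((\<lambda>t. \<Sum>j=1..n. varphi (z(j0:=t)) (2 * j + r)) has_real_derivative D) (at s) \<and>
             \<bar>D\<bar> \<le> 4 + 4 * pi"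
proof -
  have "\<forall>j. \<exists>D. ((\<lambda>t. varphi (z(j0:=t)) (2 * j + r)) has_real_derivative D) (at s) \<and>
             \<bar>D\<bar> \<le> (if 2 * j + r = j0 then 4 else 0) + (if 2 * j + r = j0 + 1 then 4 * pi else 0)"
    using varphi_deriv[OF assms] by blast
  then obtain Df where Df: "\<And>j. ((\<lambda>t. varphi (z(j0:=t)) (2 * j + r)) has_real_derivative Df j) (at s)"
    "\<And>j. \<bar>Df j\<bar> \<le> (if 2 * j + r = j0 then 4 else 0) + (if 2 * j + r = j0 + 1 then 4 * pi else 0)"
    by metis
  have d: "((\<lambda>t. \<Sum>j=1..n. varphi (z(j0:=t)) (2 * j + r)) has_real_derivative (\<Sum>j=1..n. Df j)) (at s)"
    by (rule DERIV_sum) (rule Df(1))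
  have "\<bar>\<Sum>j=1..n. Df j\<bar> \<le> (\<Sum>j=1..n. \<bar>Df j\<bar>)" by (rule sum_abs)
  also have "\<dots> \<le> (\<Sum>j=1..n. (if j = (j0 - r) div 2 then 4 else 0) + (if j = (j0 + 1 - r) div 2 then 4 * pi else 0))"
  proof (rule sum_mono)
    fix j assume "j \<in> {1..n}"
    have a: "(if 2 * j + r = j0 then 4 else 0) \<le> (if j = (j0 - r) div 2 then 4 else (0::real))" by auto
    have b: "(if 2 * j + r = j0 + 1 then 4 * pi else 0) \<le> (if j = (j0 + 1 - r) div 2 then 4 * pi else (0::real))"
      by auto
    show "\<bar>Df j\<bar> \<le> (if j = (j0 - r) div 2 then 4 else 0) + (if j = (j0 + 1 - r) div 2 then 4 * pi else 0)"
      using Df(2)[of j] a b by linarith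
  qed
  also have "\<dots> \<le> 4 + 4 * pi"
    by (simp add: sum.distrib)
  finally show ?thesis using d by blast
qed

lemma hfun_deriv:
  assumes "1 \<le> j0"
  shows "\<exists>D. ((\<lambda>t. hfun m dbar i (z(j0:=t))) has_real_derivative D) (at s) \<and>
             \<bar>D\<bar> \<le> 16 + 12 * pi"
proof -
  obtain D1 where D1: "((\<lambda>t. varphi (z(j0:=t)) 1) has_real_derivative D1) (at s)" "\<bar>D1\<bar> \<le> 4"
    using varphi_deriv[OF assms, of z 1 s] assms by (auto split: if_splits)
  obtain D2 where D2: "((\<lambda>t. \<Sum>j=1..dbar div 2. varphi (z(j0:=t)) (2 * j)) has_real_derivative D2) (at s)"
    "\<bar>D2\<bar> \<le> 4 + 4 * pi"
    using sum_deriv[OF assms, where n="dbar div 2" and z=z and r=0 and s=s] by auto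
  obtain D3 where D3: "((\<lambda>t. \<Sum>j=1..dbar div 2. varphi (z(j0:=t)) (2 * j + 1)) has_real_derivative D3) (at s)"
    "\<bar>D3\<bar> \<le> 4 + 4 * pi"
    using sum_deriv[OF assms, where n="dbar div 2" and z=z and r=1 and s=s] by auto
  have pi0: "0 \<le> pi" by simp
  show ?thesis
  proof (cases "1 \<le> i \<and> i \<le> m div 3")
    case True
    have "((\<lambda>t. hfun m dbar i (z(j0:=t))) has_real_derivative D1 + 3 * D2) (at s)"
    proof -
      have eq: "(\<lambda>t. hfun m dbar i (z(j0:=t))) = (\<lambda>t. varphi (z(j0:=t)) 1 + 3 * (\<Sum>j=1..dbar div 2. varphi (z(j0:=t)) (2 * j)))"
        using True by (simp add: hfun_def)
      show ?thesis unfolding eq by (intro DERIV_add DERIV_cmult D1 D2)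
    qed
    moreover have "\<bar>D1 + 3 * D2\<bar> \<le> 16 + 12 * pi" using D1 D2 by (simp add: abs_le_iff)
    ultimately show ?thesis by blast
  next
    case F1: False
    show ?thesis
    proof (cases "m div 3 + 1 \<le> i \<and> i \<le> 2 * m div 3")
      case True
      have "((\<lambda>t. hfun m dbar i (z(j0:=t))) has_real_derivative D1) (at s)"
      proof -
        have eq: "(\<lambda>t. hfun m dbar i (z(j0:=t))) = (\<lambda>t. varphi (z(j0:=t)) 1)"
          using True F1 by (simp add: hfun_def)
        show ?thesis unfolding eq by (rule D1)
      qed
      moreover have "\<bar>D1\<bar> \<le> 16 + 12 * pi" using D1 pi0 by linarith
      ultimately show ?thesis by blast
    next
      case False
      have "((\<lambda>t. hfun m dbar i (z(j0:=t))) has_real_derivative D1 + 3 * D3) (at s)"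
      proof -
        have eq: "(\<lambda>t. hfun m dbar i (z(j0:=t))) = (\<lambda>t. varphi (z(j0:=t)) 1 + 3 * (\<Sum>j=1..dbar div 2. varphi (z(j0:=t)) (2 * j + 1)))"
          unfolding hfun_def by (rule ext) (simp only: if_not_P[OF F1] if_not_P[OF False])
        show ?thesis unfolding eq by (intro DERIV_add DERIV_cmult D1 D3)
      qed
      moreover have "\<bar>D1 + 3 * D3\<bar> \<le> 16 + 12 * pi" using D1 D3 by (simp add: abs_le_iff)
      ultimately show ?thesis by blast
    qed
  qed
qed


lemma grad_bound:
  assumes "0 < \<epsilon>" "0 < Lf" "0 < m" "p \<in> Xidx m dbar"
  shows "\<bar>grad (Xidx m dbar) (f0 \<epsilon> Lf m dbar) x p\<bar> \<le> 2 * \<epsilon> / sqrt (real m) * (16 + 12 * pi)"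
proof -
  obtain i0 j0 where p: "p = (i0, j0)" and i0: "i0 \<in> {1..m}" and j0: "j0 \<in> {1..dbar}"
    using assms(4) by (cases p) (auto simp: Xidx_def)
  define C where "C = 300 * pi * \<epsilon>\<^sup>2 / (real m * Lf)"
  define k where "k = sqrt (real m) * Lf / (150 * pi * \<epsilon>)"
  define w where "w = (\<lambda>j. sqrt (real m) * Lf * x (i0, j) / (150 * pi * \<epsilon>))"
  have j01: "1 \<le> j0" using j0 by auto
  obtain DH where DH: "((\<lambda>s. hfun m dbar i0 (w(j0:=s))) has_real_derivative DH) (at (k * x p))"
    "\<bar>DH\<bar> \<le> 16 + 12 * pi"
    using hfun_deriv[OF j01, of m dbar i0 w "k * x p"] by auto
  have kd: "((\<lambda>t. k * t) has_real_derivative k) (at (x p))"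
    using DERIV_cmult[OF DERIV_ident, of k] by simp
  have g0: "((\<lambda>t. C * hfun m dbar i0 (w(j0 := k * t))) has_real_derivative C * (DH * k)) (at (x p))"
    by (intro DERIV_cmult DERIV_chain2[OF DH(1) kd])
  define F where "F = (\<lambda>i. if i = i0 then C * (DH * k) else 0)"
  have each: "((\<lambda>t. ffun \<epsilon> Lf m dbar i (\<lambda>j. (x(p:=t)) (i, j))) has_real_derivative F i) (at (x p))"
    for i
  proof (cases "i = i0")
    case True
    have "(\<lambda>t. ffun \<epsilon> Lf m dbar i (\<lambda>j. (x(p:=t)) (i, j))) = (\<lambda>t. C * hfun m dbar i0 (w(j0 := k * t)))"
    proof (rule ext)
      fix t
      have "(\<lambda>j. sqrt (real m) * Lf * (x(p:=t)) (i, j) / (150 * pi * \<epsilon>)) = w(j0 := k * t)"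
        by (rule ext) (auto simp: w_def k_def p True)
      then show "ffun \<epsilon> Lf m dbar i (\<lambda>j. (x(p:=t)) (i, j)) = C * hfun m dbar i0 (w(j0 := k * t))"
        unfolding ffun_def C_def using True by simp
    qed
    then show ?thesis using g0 True by (simp add: F_def)
  next
    case False
    have "(\<lambda>t. ffun \<epsilon> Lf m dbar i (\<lambda>j. (x(p:=t)) (i, j))) = (\<lambda>t. ffun \<epsilon> Lf m dbar i (\<lambda>j. x (i, j)))"
      using False by (auto simp: p)
    then show ?thesis using False by (simp add: F_def)
  qed
  have "((\<lambda>t. f0 \<epsilon> Lf m dbar (x(p:=t))) has_real_derivative (\<Sum>i=1..m. F i)) (at (x p))"
    unfolding f0_def by (rule DERIV_sum) (rule each)
  moreover have "(\<Sum>i=1..m. F i) = C * (DH * k)"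
    using i0 by (simp add: F_def)
  ultimately have "grad (Xidx m dbar) (f0 \<epsilon> Lf m dbar) x p = C * (DH * k)"
    using assms(4) by (simp add: grad_def DERIV_imp_deriv)
  moreover have ck: "C * k = 2 * \<epsilon> / sqrt (real m)"
  proof -
    have sm: "real m = sqrt (real m) * sqrt (real m)" using assms(3) by simp
    have sp: "0 < sqrt (real m)" using assms(3) by simp
    have "C * k = (2 * \<epsilon>) * ((150 * pi * \<epsilon>) * Lf * sqrt (real m)) / ((sqrt (real m) * sqrt (real m) * Lf) * (150 * pi * \<epsilon>))"
      unfolding C_def k_def by (subst sm) (simp add: power2_eq_square)
    also have "\<dots> = 2 * \<epsilon> / sqrt (real m)"
      using assms sp pi_gt_zero by (simp add: field_simps)
    finally show ?thesis .
  qed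
  moreover have "0 \<le> C * k" using assms unfolding C_def k_def by simp
  moreover have "\<bar>C * (DH * k)\<bar> = (C * k) * \<bar>DH\<bar>"
  proof -
    have "\<bar>C * (DH * k)\<bar> = \<bar>C * k\<bar> * \<bar>DH\<bar>" by (simp add: abs_mult)
    then show ?thesis using \<open>0 \<le> C * k\<close> by simp
  qed
  moreover have "(C * k) * \<bar>DH\<bar> \<le> (C * k) * (16 + 12 * pi)"
    using DH(2) \<open>0 \<le> C * k\<close> by (rule mult_left_mono)
  ultimately show ?thesis by simp
qed

lemma vnorm_L2: "vnorm R v = L2_set v R" by (simp add: vnorm_def L2_set_def)

lemma vnorm_nonneg: "0 \<le> vnorm R v" by (simp add: vnorm_L2)

lemma vnorm_ge_comp: "finite R \<Longrightarrow> p \<in> R \<Longrightarrow> \<bar>v p\<bar> \<le> vnorm R v"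
  unfolding vnorm_L2 using member_le_L2_set[of R p "\<lambda>q. \<bar>v q\<bar>"] by (simp add: L2_set_def)

lemma vnorm_sq: "vnorm R v \<le> a \<Longrightarrow> (\<Sum>p\<in>R. (v p)\<^sup>2) \<le> a\<^sup>2"
  unfolding vnorm_def by (rule sqrt_le_D)

lemma telescope: fixes g :: "nat \<Rightarrow> real" shows "(\<Sum>i=1..k. (g (i - 1) - g i)) = g 0 - g k"
  by (induction k) (auto simp: sum.atLeast1_atMost_eq)

lemma subdiff_lower:
  assumes fin: "finite R" and p: "p \<in> R" and ys: "ys \<in> vecs R" and nz: "ys p \<noteq> 0"
    and s: "s \<in> subdiff R (\<lambda>y. c * l1norm R y) ys"
  shows "c \<le> \<bar>s p\<bar>"
proof -
  define w where "w = ys(p := 0)"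
  have w: "w \<in> vecs R" using ys by (auto simp: vecs_def w_def)
  have ineq: "c * l1norm R w \<ge> c * l1norm R ys + vinner R s (\<lambda>q. w q - ys q)"
    using s w by (auto simp: subdiff_def)
  have "l1norm R w = (\<Sum>q\<in>R. \<bar>ys q\<bar> - (if q = p then \<bar>ys p\<bar> else 0))"
    unfolding l1norm_def w_def by (rule sum.cong) auto
  also have "\<dots> = l1norm R ys - \<bar>ys p\<bar>"
    using fin p by (simp add: sum_subtractf l1norm_def)
  finally have l1: "l1norm R w = l1norm R ys - \<bar>ys p\<bar>" .
  have "vinner R s (\<lambda>q. w q - ys q) = (\<Sum>q\<in>R. if q = p then - (s p * ys p) else 0)"
    unfolding vinner_def w_def by (rule sum.cong) auto
  also have "\<dots> = - (s p * ys p)" using fin p by simp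
  finally have vi: "vinner R s (\<lambda>q. w q - ys q) = - (s p * ys p)" .
  from ineq l1 vi have "c * \<bar>ys p\<bar> \<le> s p * ys p" by (simp add: algebra_simps)
  also have "\<dots> \<le> \<bar>s p\<bar> * \<bar>ys p\<bar>" by (metis abs_ge_self abs_mult)
  finally show ?thesis using nz by simp
qed

lemma subdiff_nonempty:
  assumes fin: "finite R" and c: "0 \<le> c"
  shows "(\<lambda>q. if q \<in> R then c * sgn (ys q) else 0) \<in> subdiff R (\<lambda>y. c * l1norm R y) ys"
proof -
  have "c * l1norm R ys + vinner R (\<lambda>q. if q \<in> R then c * sgn (ys q) else 0) (\<lambda>q. w q - ys q)
        \<le> c * l1norm R w" for w
  proof -
    have "c * l1norm R ys + vinner R (\<lambda>q. if q \<in> R then c * sgn (ys q) else 0) (\<lambda>q. w q - ys q)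
          = (\<Sum>q\<in>R. c * (\<bar>ys q\<bar> + sgn (ys q) * (w q - ys q)))"
      unfolding l1norm_def vinner_def by (simp add: sum_distrib_left sum.distrib[symmetric] algebra_simps)
    also have "\<dots> \<le> (\<Sum>q\<in>R. c * \<bar>w q\<bar>)"
    proof (rule sum_mono)
      fix q
      have "\<bar>ys q\<bar> + sgn (ys q) * (w q - ys q) \<le> \<bar>w q\<bar>"
        by (cases "ys q > 0"; cases "ys q < 0") (auto simp: sgn_real_def)
      then show "c * (\<bar>ys q\<bar> + sgn (ys q) * (w q - ys q)) \<le> c * \<bar>w q\<bar>"
        using c by (rule mult_left_mono)
    qed
    also have "\<dots> = c * l1norm R w" by (simp add: l1norm_def sum_distrib_left)
    finally show ?thesis .
  qed
  then show ?thesis by (auto simp: subdiff_def vecs_def)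
qed

lemma dist_lower:
  assumes fin: "finite R" and p: "p \<in> R" and ne: "S \<noteq> {}" and lb: "\<And>s. s \<in> S \<Longrightarrow> c \<le> \<bar>s p\<bar>"
  shows "c - \<bar>z p\<bar> \<le> dist0_shift R S z"
  unfolding dist0_shift_def
proof (rule cInf_greatest)
  show "{vnorm R (\<lambda>p. s p - z p) |s. s \<in> S} \<noteq> {}" using ne by auto
  fix x assume "x \<in> {vnorm R (\<lambda>p. s p - z p) |s. s \<in> S}"
  then obtain s where s: "s \<in> S" and x: "x = vnorm R (\<lambda>p. s p - z p)" by auto
  have "c - \<bar>z p\<bar> \<le> \<bar>s p - z p\<bar>" using lb[OF s] by linarith
  also have "\<dots> \<le> x" unfolding x using vnorm_ge_comp[OF fin p, of "\<lambda>p. s p - z p"] by simp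
  finally show "c - \<bar>z p\<bar> \<le> x" .
qed


lemma tm_formula:
  assumes g: "\<gamma> \<in> vecs (Hrows m dbar)" and i: "1 \<le> i" "i \<le> m" and j: "j \<in> {1..dbar}"
  shows "tmatvec (Hrows m dbar) (Xidx m dbar) (Kmat m Lf) \<gamma> (i, j) = real m * Lf * (\<gamma> (i - 1, j) - \<gamma> (i, j))"
proof -
  have ij: "(i, j) \<in> Xidx m dbar" using i j by (auto simp: Xidx_def)
  have "tmatvec (Hrows m dbar) (Xidx m dbar) (Kmat m Lf) \<gamma> (i, j)
        = (\<Sum>r\<in>{1..m-1} \<times> {1..dbar}. Kmat m Lf r (i, j) * \<gamma> r)"
    using ij by (simp add: tmatvec_def Hrows_def)
  also have "\<dots> = (\<Sum>r1\<in>{1..m-1}. \<Sum>r2\<in>{1..dbar}. Kmat m Lf (r1, r2) (i, j) * \<gamma> (r1, r2))"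
    by (simp add: sum.cartesian_product)
  also have "\<dots> = (\<Sum>r1\<in>{1..m-1}. real m * Lf * Jent r1 i * \<gamma> (r1, j))"
  proof (rule sum.cong[OF refl])
    fix r1
    have "(\<Sum>r2\<in>{1..dbar}. Kmat m Lf (r1, r2) (i, j) * \<gamma> (r1, r2))
        = (\<Sum>r2\<in>{1..dbar}. if r2 = j then real m * Lf * Jent r1 i * \<gamma> (r1, j) else 0)"
      by (rule sum.cong) (auto simp: Kmat_def)
    also have "\<dots> = real m * Lf * Jent r1 i * \<gamma> (r1, j)" using j by simp
    finally show "(\<Sum>r2\<in>{1..dbar}. Kmat m Lf (r1, r2) (i, j) * \<gamma> (r1, r2)) = real m * Lf * Jent r1 i * \<gamma> (r1, j)" .
  qed
  also have "\<dots> = (\<Sum>r1\<in>{0..m}. real m * Lf * Jent r1 i * \<gamma> (r1, j))"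
  proof (rule sum.mono_neutral_left)
    show "\<forall>r1\<in>{0..m} - {1..m-1}. real m * Lf * Jent r1 i * \<gamma> (r1, j) = 0"
    proof
      fix r1 assume "r1 \<in> {0..m} - {1..m-1}"
      then have "(r1, j) \<notin> Hrows m dbar" by (auto simp: Hrows_def)
      then show "real m * Lf * Jent r1 i * \<gamma> (r1, j) = 0" using g by (simp add: vecs_def)
    qed
  qed auto
  also have "\<dots> = (\<Sum>r1\<in>{0..m}. (if r1 = i then - (real m * Lf * \<gamma> (r1, j)) else 0)
                                + (if r1 = i - 1 then real m * Lf * \<gamma> (r1, j) else 0))"
    by (rule sum.cong) (use i in \<open>auto simp: Jent_def\<close>)
  also have "\<dots> = real m * Lf * (\<gamma> (i - 1, j) - \<gamma> (i, j))"
    using i by (simp add: sum.distrib algebra_simps)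
  finally show ?thesis .
qed

lemma opnorm_ge_entry:
  assumes R: "finite R" and C: "finite C" and r: "r \<in> R" and c: "c \<in> C"
  shows "\<bar>M r c\<bar> \<le> opnorm R C M"
proof -
  define x0 where "x0 = (\<lambda>q. if q = c then 1 else (0::real))"
  have x0v: "x0 \<in> vecs C" using c by (auto simp: vecs_def x0_def)
  have "(\<Sum>q\<in>C. (x0 q)\<^sup>2) = (\<Sum>q\<in>C. if q = c then 1 else 0)"
    by (rule sum.cong) (auto simp: x0_def)
  also have "\<dots> = 1" using C c by simp
  finally have x0n: "vnorm C x0 \<le> 1" by (simp add: vnorm_def)
  have "matvec R C M x0 r = (\<Sum>q\<in>C. if q = c then M r c else 0)"
    using r unfolding matvec_def by (auto intro!: sum.cong simp: x0_def)
  also have "\<dots> = M r c" using C c by simp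
  finally have mv: "matvec R C M x0 r = M r c" .
  have in_set: "vnorm R (matvec R C M x0) \<in> {vnorm R (matvec R C M x) | x. x \<in> vecs C \<and> vnorm C x \<le> 1}"
    using x0v x0n by blast
  define T where "T = (\<Sum>r\<in>R. \<Sum>c\<in>C. \<bar>M r c\<bar>)"
  have bdd: "bdd_above {vnorm R (matvec R C M x) | x. x \<in> vecs C \<and> vnorm C x \<le> 1}"
  proof (rule bdd_aboveI[of _ T])
    fix y assume "y \<in> {vnorm R (matvec R C M x) | x. x \<in> vecs C \<and> vnorm C x \<le> 1}"
    then obtain x where x: "vnorm C x \<le> 1" and y: "y = vnorm R (matvec R C M x)" by auto
    have xc: "\<bar>x q\<bar> \<le> 1" if "q \<in> C" for q
      using vnorm_ge_comp[OF C that, of x] x by linarith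
    have "y \<le> (\<Sum>r\<in>R. \<bar>matvec R C M x r\<bar>)" unfolding y vnorm_L2 by (rule L2_set_le_sum_abs)
    also have "\<dots> \<le> T" unfolding T_def
    proof (rule sum_mono)
      fix r' assume r': "r' \<in> R"
      have "\<bar>matvec R C M x r'\<bar> = \<bar>\<Sum>q\<in>C. M r' q * x q\<bar>" using r' by (simp add: matvec_def)
      also have "\<dots> \<le> (\<Sum>q\<in>C. \<bar>M r' q * x q\<bar>)" by (rule sum_abs)
      also have "\<dots> \<le> (\<Sum>q\<in>C. \<bar>M r' q\<bar>)"
      proof (rule sum_mono)
        fix q assume "q \<in> C"
        then have "\<bar>M r' q\<bar> * \<bar>x q\<bar> \<le> \<bar>M r' q\<bar> * 1" using xc by (intro mult_left_mono) auto
        then show "\<bar>M r' q * x q\<bar> \<le> \<bar>M r' q\<bar>" by (simp add: abs_mult)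
      qed
      finally show "\<bar>matvec R C M x r'\<bar> \<le> (\<Sum>q\<in>C. \<bar>M r' q\<bar>)" .
    qed
    finally show "y \<le> T" .
  qed
  have "\<bar>M r c\<bar> \<le> vnorm R (matvec R C M x0)"
    using vnorm_ge_comp[OF R r, of "matvec R C M x0"] mv by simp
  also have "\<dots> \<le> opnorm R C M" unfolding opnorm_def by (rule cSup_upper[OF in_set bdd])
  finally show ?thesis .
qed


lemma mset_sub:
  assumes "m1 \<ge> 2" "m2 \<ge> 1"
  shows "Mset m1 m2 \<subseteq> {1..3 * m1 * m2 - 1}"
proof
  fix k assume "k \<in> Mset m1 m2"
  then obtain i where k: "k = i * m1" and i: "1 \<le> i" "i \<le> 3 * m2 - 1" by (auto simp: Mset_def)
  have "i < 3 * m2" using i assms by linarith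
  then have "i * m1 < 3 * m2 * m1" using assms by (intro mult_less_mono1) auto
  moreover have "1 * 1 \<le> i * m1" using i assms by (intro mult_le_mono) auto
  moreover have "3 * m2 * m1 = 3 * m1 * m2" by simp
  ultimately have "1 \<le> k" "k < 3 * m1 * m2" using k by linarith+
  then show "k \<in> {1..3 * m1 * m2 - 1}" by simp
qed

theorem lemma9:
  fixes \<epsilon> Lf \<beta> eh :: real and m1 m2 dbar :: nat and xs ys :: vec
  assumes "0 < \<epsilon>" and "\<epsilon> < 1" and "0 < Lf"
    and "m1 \<ge> 2" and "m2 \<ge> 1" and "even (m1 * m2)"
    and "odd dbar" and "dbar \<ge> 5"
    and "\<beta> > (50 * pi + 1 + opnorm (MCset m1 m2 \<times> {1..dbar}) (Xidx (3 * m1 * m2) dbar)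
                                  (Kmat (3 * m1 * m2) Lf))
              * sqrt (real (3 * m1 * m2)) * \<epsilon>"
    and "0 \<le> eh" and "eh \<le> \<epsilon>"
    and "xs \<in> vecs (Xidx (3 * m1 * m2) dbar)"
    and "ys \<in> vecs (Mset m1 m2 \<times> {1..dbar})"
    and "SP_stationary \<epsilon> Lf m1 m2 dbar \<beta> eh xs ys"
  shows "AP_stationary \<epsilon> Lf (3 * m1 * m2) dbar (2 * eh) xs"
proof -
  define m where "m = 3 * m1 * m2"
  define X where "X = Xidx m dbar"
  define Rb where "Rb = Mset m1 m2 \<times> {1..dbar}"
  define Ra where "Ra = MCset m1 m2 \<times> {1..dbar}"
  define H where "H = Hrows m dbar"
  define K where "K = Kmat m Lf"
  define f where "f = f0 \<epsilon> Lf m dbar"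
  define opA where "opA = opnorm Ra X K"
  have beta: "\<beta> > (50 * pi + 1 + opA) * sqrt (real m) * \<epsilon>"
    using assms(9) unfolding opA_def Ra_def X_def K_def m_def by simp
  have "2 * 1 \<le> m1 * m2" using assms(4,5) by (intro mult_le_mono) auto
  moreover have "m = 3 * (m1 * m2)" unfolding m_def by (simp add: mult.assoc)
  ultimately have m6: "m \<ge> 6" by linarith
  have msub: "Mset m1 m2 \<subseteq> {1..m - 1}" using mset_sub[OF assms(4,5)] by (simp add: m_def)
  have mcsub: "MCset m1 m2 \<subseteq> {1..m - 1}" by (auto simp: MCset_def m_def)
  have finX: "finite X" by (simp add: X_def Xidx_def)
  have finH: "finite H" by (simp add: H_def Hrows_def)
  have RbH: "Rb \<subseteq> H" using msub by (auto simp: Rb_def H_def Hrows_def)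
  have RaH: "Ra \<subseteq> H" using mcsub by (auto simp: Ra_def H_def Hrows_def)
  have finRb: "finite Rb" using RbH finH finite_subset by blast
  have finRa: "finite Ra" using RaH finH finite_subset by blast
  have mc_eq: "MCset m1 m2 = {1..m-1} - Mset m1 m2" by (simp add: MCset_def m_def)
  have Hun: "H = Rb \<union> Ra" using msub unfolding H_def Hrows_def Rb_def Ra_def mc_eq by auto
  have disj: "Rb \<inter> Ra = {}" by (auto simp: Rb_def Ra_def MCset_def)
  from assms(14) obtain z1 z2 where z1: "z1 \<in> vecs Rb" and z2: "z2 \<in> vecs Ra"
    and d1: "dist0_shift Rb (subdiff Rb (gbar \<beta> m Lf Rb) ys) z1 \<le> eh"
    and d2: "vnorm X (\<lambda>p. grad X f xs p + tmatvec Rb X K z1 p + tmatvec Ra X K z2 p) \<le> eh"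
    and d3: "vnorm Rb (\<lambda>p. ys p - matvec Rb X K xs p) \<le> eh"
    and d4: "vnorm Ra (matvec Ra X K xs) \<le> eh"
    unfolding SP_stationary_def Let_def m_def[symmetric] X_def[symmetric] Rb_def[symmetric]
      Ra_def[symmetric] K_def[symmetric] f_def[symmetric]
    by auto
  define \<gamma> where "\<gamma> = (\<lambda>r. z1 r + z2 r)"
  have \<gamma>v: "\<gamma> \<in> vecs H" using z1 z2 RbH RaH Hun by (auto simp: vecs_def \<gamma>_def)
  have tsplit: "tmatvec H X K \<gamma> p = tmatvec Rb X K z1 p + tmatvec Ra X K z2 p" for p
  proof (cases "p \<in> X")
    case True
    have s1: "(\<Sum>r\<in>H. K r p * z1 r) = (\<Sum>r\<in>Rb. K r p * z1 r)"
      by (rule sum.mono_neutral_right[OF finH RbH]) (use z1 in \<open>auto simp: vecs_def\<close>)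
    have s2: "(\<Sum>r\<in>H. K r p * z2 r) = (\<Sum>r\<in>Ra. K r p * z2 r)"
      by (rule sum.mono_neutral_right[OF finH RaH]) (use z2 in \<open>auto simp: vecs_def\<close>)
    show ?thesis using True s1 s2
      by (simp add: tmatvec_def \<gamma>_def distrib_left sum.distrib)
  next
    case False
    then show ?thesis by (simp add: tmatvec_def)
  qed
  define e where "e = (\<lambda>p. grad X f xs p + tmatvec H X K \<gamma> p)"
  have eb: "vnorm X e \<le> eh" using d2 by (simp add: e_def tsplit add.assoc)
  have P1: "Inf {vnorm X (\<lambda>p. grad X f xs p + tmatvec H X K \<gamma>' p) | \<gamma>'. \<gamma>' \<in> vecs H} \<le> 2 * eh"
  proof -
    have "Inf {vnorm X (\<lambda>p. grad X f xs p + tmatvec H X K \<gamma>' p) | \<gamma>'. \<gamma>' \<in> vecs H} \<le> vnorm X e"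
    proof (rule cInf_lower)
      show "vnorm X e \<in> {vnorm X (\<lambda>p. grad X f xs p + tmatvec H X K \<gamma>' p) | \<gamma>'. \<gamma>' \<in> vecs H}"
        using \<gamma>v unfolding e_def by blast
      show "bdd_below {vnorm X (\<lambda>p. grad X f xs p + tmatvec H X K \<gamma>' p) | \<gamma>'. \<gamma>' \<in> vecs H}"
        by (rule bdd_belowI[of _ 0]) (auto simp: vnorm_nonneg)
    qed
    then show ?thesis using eb assms(10) by linarith
  qed
  have mpos: "0 < real m" using m6 by simp
  have mLpos: "0 < real m * Lf" using mpos assms(3) by simp
  have opA_ge: "real m * Lf \<le> opA"
  proof -
    have "1 \<notin> Mset m1 m2"
    proof
      assume "1 \<in> Mset m1 m2"
      then obtain i where "1 = i * m1" "1 \<le> i" by (auto simp: Mset_def)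
      moreover have "1 * 2 \<le> i * m1" using \<open>1 \<le> i\<close> assms(4) by (intro mult_le_mono) auto
      ultimately show False by linarith
    qed
    then have "(1, 1) \<in> Ra" using m6 assms(8) by (auto simp: Ra_def mc_eq)
    moreover have "(1, 1) \<in> X" using m6 assms(8) by (auto simp: X_def Xidx_def)
    ultimately have "\<bar>K (1, 1) (1, 1)\<bar> \<le> opA"
      unfolding opA_def by (intro opnorm_ge_entry finRa finX)
    then show ?thesis using assms(3) by (simp add: K_def Kmat_def Jent_def)
  qed
  have yz: "ys p = 0" if pRb: "p \<in> Rb" for p
  proof (rule ccontr)
    assume nz: "ys p \<noteq> 0"
    obtain k j where p: "p = (k, j)" and kM: "k \<in> Mset m1 m2" and j: "j \<in> {1..dbar}"
      using pRb by (auto simp: Rb_def)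
    have k1: "1 \<le> k" "k \<le> m - 1" using kM msub by auto
    define c where "c = \<beta> / (real m * Lf)"
    have gb: "gbar \<beta> m Lf Rb = (\<lambda>y. c * l1norm Rb y)" by (simp add: gbar_def c_def fun_eq_iff)
    have opA0: "0 \<le> opA" using opA_ge mLpos by linarith
    have "0 \<le> (50 * pi + 1 + opA) * sqrt (real m) * \<epsilon>" using opA0 assms(1) by simp
    then have c0: "0 \<le> c" using beta mLpos by (simp add: c_def)
    have ysv: "ys \<in> vecs Rb" using assms(13) by (simp add: Rb_def)
    have "c - \<bar>z1 p\<bar> \<le> dist0_shift Rb (subdiff Rb (gbar \<beta> m Lf Rb) ys) z1"
      unfolding gb
    proof (rule dist_lower[OF finRb pRb])
      show "subdiff Rb (\<lambda>y. c * l1norm Rb y) ys \<noteq> {}"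
        using subdiff_nonempty[OF finRb c0, of ys] by blast
      show "\<And>s. s \<in> subdiff Rb (\<lambda>y. c * l1norm Rb y) ys \<Longrightarrow> c \<le> \<bar>s p\<bar>"
        by (rule subdiff_lower[OF finRb pRb ysv nz])
    qed
    with d1 have zlow: "c - eh \<le> \<bar>z1 p\<bar>" by linarith
    have pnRa: "p \<notin> Ra" using pRb disj by auto
    have gp: "\<gamma> (k, j) = z1 p" using z2 pnRa by (simp add: \<gamma>_def vecs_def p)
    have g0: "\<gamma> (0, j) = 0" using \<gamma>v by (simp add: vecs_def H_def Hrows_def)
    have "(\<Sum>i=1..k. tmatvec H X K \<gamma> (i, j)) = (\<Sum>i=1..k. real m * Lf * (\<gamma> (i - 1, j) - \<gamma> (i, j)))"
    proof (rule sum.cong[OF refl])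
      fix i assume "i \<in> {1..k}"
      then have "1 \<le> i" "i \<le> m" using k1 by auto
      then show "tmatvec H X K \<gamma> (i, j) = real m * Lf * (\<gamma> (i - 1, j) - \<gamma> (i, j))"
        unfolding H_def X_def K_def by (rule tm_formula[OF \<gamma>v[unfolded H_def] _ _ j])
    qed
    also have "\<dots> = real m * Lf * (\<gamma> (0, j) - \<gamma> (k, j))"
    proof -
      have tl: "(\<Sum>i=1..k. \<gamma> (i - 1, j) - \<gamma> (i, j)) = \<gamma> (0, j) - \<gamma> (k, j)"
        using telescope[of "\<lambda>i. \<gamma> (i, j)" k] by simp
      show ?thesis by (simp only: sum_distrib_left[symmetric] tl)
    qed
    finally have tele: "(\<Sum>i=1..k. tmatvec H X K \<gamma> (i, j)) = - (real m * Lf * z1 p)"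
      using g0 gp by simp
    have that_eq: "real m * Lf * z1 p = (\<Sum>i=1..k. grad X f xs (i, j) - e (i, j))"
    proof -
      have "(\<Sum>i=1..k. grad X f xs (i, j) - e (i, j)) = (\<Sum>i=1..k. - tmatvec H X K \<gamma> (i, j))"
        by (rule sum.cong) (simp_all add: e_def)
      also have "\<dots> = - (\<Sum>i=1..k. tmatvec H X K \<gamma> (i, j))" by (rule sum_negf)
      finally show ?thesis using tele by simp
    qed
    have "real m * Lf * \<bar>z1 p\<bar> = \<bar>\<Sum>i=1..k. grad X f xs (i, j) - e (i, j)\<bar>"
    proof -
      have "real m * Lf * \<bar>z1 p\<bar> = \<bar>real m * Lf * z1 p\<bar>"
        using mLpos by (simp only: abs_mult[of "real m * Lf"] abs_of_pos)
      then show ?thesis using that_eq by simp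
    qed
    also have "\<dots> \<le> (\<Sum>i=1..k. \<bar>grad X f xs (i, j)\<bar>) + (\<Sum>i=1..k. \<bar>e (i, j)\<bar>)"
      by (rule order_trans[OF sum_abs]) (simp add: sum.distrib[symmetric] sum_mono abs_triangle_ineq4)
    also have "(\<Sum>i=1..k. \<bar>grad X f xs (i, j)\<bar>) \<le> real m * (2 * \<epsilon> / sqrt (real m) * (16 + 12 * pi))"
    proof -
      have "(\<Sum>i=1..k. \<bar>grad X f xs (i, j)\<bar>) \<le> (\<Sum>i=1..k. 2 * \<epsilon> / sqrt (real m) * (16 + 12 * pi))"
      proof (rule sum_mono)
        fix i assume "i \<in> {1..k}"
        then have "(i, j) \<in> Xidx m dbar" using k1 j by (auto simp: Xidx_def)
        then show "\<bar>grad X f xs (i, j)\<bar> \<le> 2 * \<epsilon> / sqrt (real m) * (16 + 12 * pi)"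
          unfolding X_def f_def using grad_bound[OF assms(1) assms(3)] m6 by simp
      qed
      also have "\<dots> = real k * (2 * \<epsilon> / sqrt (real m) * (16 + 12 * pi))" by simp
      also have "\<dots> \<le> real m * (2 * \<epsilon> / sqrt (real m) * (16 + 12 * pi))"
        using k1 assms(1) by (intro mult_right_mono) auto
      finally show ?thesis .
    qed
    also have "(\<Sum>i=1..k. \<bar>e (i, j)\<bar>) \<le> sqrt (real m) * eh"
    proof -
      have "(\<Sum>i=1..k. \<bar>e (i, j)\<bar>) = (\<Sum>i=1..k. \<bar>e (i, j)\<bar> * \<bar>1\<bar>)" by simp
      also have "\<dots> \<le> L2_set (\<lambda>i. e (i, j)) {1..k} * L2_set (\<lambda>i. 1) {1..k}"
        by (rule L2_set_mult_ineq)
      also have "L2_set (\<lambda>i. 1) {1..k} = sqrt (real k)" by (simp add: L2_set_constant)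
      also have "L2_set (\<lambda>i. e (i, j)) {1..k} \<le> L2_set e X"
      proof -
        have "(\<Sum>i\<in>{1..k}. (e (i, j))\<^sup>2) = (\<Sum>q\<in>(\<lambda>i. (i, j)) ` {1..k}. (e q)\<^sup>2)"
          by (simp add: sum.reindex inj_on_def)
        also have "\<dots> \<le> (\<Sum>q\<in>X. (e q)\<^sup>2)"
          by (rule sum_mono2[OF finX]) (use k1 j in \<open>auto simp: X_def Xidx_def\<close>)
        finally show ?thesis by (simp add: L2_set_def)
      qed
      then have "L2_set (\<lambda>i. e (i, j)) {1..k} * sqrt (real k) \<le> L2_set e X * sqrt (real m)"
        using k1 by (intro mult_mono) auto
      also have "\<dots> \<le> eh * sqrt (real m)"
        using eb by (intro mult_right_mono) (auto simp: vnorm_L2)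
      finally show ?thesis by (simp add: mult.commute)
    qed
    finally have main: "real m * Lf * \<bar>z1 p\<bar> \<le> real m * (2 * \<epsilon> / sqrt (real m) * (16 + 12 * pi)) + sqrt (real m) * eh"
      by simp
    have "real m * Lf * c = \<beta>" unfolding c_def
      using m6 assms(3) by simp
    moreover have "real m * Lf * (c - eh) \<le> real m * Lf * \<bar>z1 p\<bar>"
      using zlow mLpos by (intro mult_left_mono) auto
    ultimately have b1: "\<beta> \<le> real m * Lf * eh + real m * (2 * \<epsilon> / sqrt (real m) * (16 + 12 * pi)) + sqrt (real m) * eh"
      using main by (simp add: algebra_simps)
    have sm: "real m = sqrt (real m) * sqrt (real m)" using mpos by simp
    have sm1: "1 \<le> sqrt (real m)" using m6 by simp
    have t2: "real m * (2 * \<epsilon> / sqrt (real m) * (16 + 12 * pi)) = sqrt (real m) * \<epsilon> * (32 + 24 * pi)"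
    proof -
      have gen: "\<And>sq::real. 0 < sq \<Longrightarrow> sq * sq * (2 * \<epsilon> / sq * (16 + 12 * pi)) = sq * \<epsilon> * (32 + 24 * pi)"
        by (simp add: field_simps)
      have "0 < sqrt (real m)" using mpos by simp
      from gen[OF this] show ?thesis by simp
    qed
    have "32 + 24 * pi \<le> 50 * pi" using pi_gt3 by linarith
    then have t2b: "sqrt (real m) * \<epsilon> * (32 + 24 * pi) \<le> sqrt (real m) * \<epsilon> * (50 * pi)"
      using assms(1) sm1 by (intro mult_left_mono) auto
    have t3: "sqrt (real m) * eh \<le> sqrt (real m) * \<epsilon>" using assms(11) sm1 by (intro mult_left_mono) auto
    have "real m * Lf * eh \<le> opA * (sqrt (real m) * \<epsilon>)"
    proof (rule mult_mono)
      show "eh \<le> sqrt (real m) * \<epsilon>" using assms(11) sm1 assms(1)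
      proof -
        have "1 * \<epsilon> \<le> sqrt (real m) * \<epsilon>" using sm1 assms(1) by (intro mult_right_mono) auto
        then show ?thesis using assms(11) by simp
      qed
    qed (use opA_ge assms(10) mLpos in auto)
    moreover have "(50 * pi + 1 + opA) * sqrt (real m) * \<epsilon>
        = sqrt (real m) * \<epsilon> * (50 * pi) + sqrt (real m) * \<epsilon> + opA * (sqrt (real m) * \<epsilon>)"
      by (simp add: algebra_simps)
    ultimately have "\<beta> \<le> (50 * pi + 1 + opA) * sqrt (real m) * \<epsilon>"
      using b1 t2 t2b t3 by linarith
    with beta show False by linarith
  qed
  have P3: "vnorm H (matvec H X K xs) \<le> 2 * eh"
  proof -
    have mvb: "matvec H X K xs r = matvec Rb X K xs r" if "r \<in> Rb" for r
      using that RbH by (auto simp: matvec_def)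
    have mva: "matvec H X K xs r = matvec Ra X K xs r" if "r \<in> Ra" for r
      using that RaH by (auto simp: matvec_def)
    have "(\<Sum>r\<in>H. (matvec H X K xs r)\<^sup>2) = (\<Sum>r\<in>Rb. (matvec H X K xs r)\<^sup>2) + (\<Sum>r\<in>Ra. (matvec H X K xs r)\<^sup>2)"
      unfolding Hun by (rule sum.union_disjoint[OF finRb finRa disj])
    also have "(\<Sum>r\<in>Rb. (matvec H X K xs r)\<^sup>2) = (\<Sum>r\<in>Rb. (ys r - matvec Rb X K xs r)\<^sup>2)"
      by (rule sum.cong) (auto simp: mvb yz)
    also have "(\<Sum>r\<in>Ra. (matvec H X K xs r)\<^sup>2) = (\<Sum>r\<in>Ra. (matvec Ra X K xs r)\<^sup>2)"
      by (rule sum.cong) (auto simp: mva)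
    finally have "(\<Sum>r\<in>H. (matvec H X K xs r)\<^sup>2) \<le> eh\<^sup>2 + eh\<^sup>2"
      using vnorm_sq[OF d3] vnorm_sq[OF d4] by linarith
    also have "\<dots> \<le> (2 * eh)\<^sup>2" by (simp add: power2_eq_square)
    finally show ?thesis unfolding vnorm_def using assms(10) by (intro real_le_lsqrt) auto
  qed
  show ?thesis
    unfolding AP_stationary_def Let_def m_def[symmetric] X_def[symmetric] H_def[symmetric]
      K_def[symmetric] f_def[symmetric]
    using P1 P3 by simp
qed

end
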